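(* Let $\mathscr{A}\in\mathbb{R}^{n\times n\times n_3}$, $\mathscr{V}\in\mathbb{R}^{n\times s\times n_3}$, and suppose $m$ steps of the tensor tubal-global Arnoldi process described in the context have been run (without breakdown). Then $$\mathscr{A}\star\mathbb{V}_m=\mathbb{V}_m\star(\mathscr{H}_m\circledast\mathscr{I}_{ssn_3})+\mathscr{V}_{m+1}\star((\mathbf{h}_{m+1,m}\star\mathscr{E}_m)\circledast\mathscr{I}_{ssn_3}),$$ $$\mathbb{V}_m^T\diamondsuit(\mathscr{A}\star\mathbb{V}_m)=\mathscr{H}_m,\qquad \mathscr{A}\star\mathbb{V}_m=\mathbb{V}_{m+1}\star(\widetilde{\mathscr{H}}_m\circledast\mathscr{I}_{ssn_3}),$$ $$\mathbb{V}_{m+1}^T\diamondsuit(\mathscr{A}\star\mathbb{V}_m)=\widetilde{\mathscr{H}}_m,\qquad \mathbb{V}_m^T\diamondsuit\mathbb{V}_m=\mathscr{I}_{mmn_3}.$$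
   Context: All tensors are real third-order arrays. $\widehat{\mathscr{A}}=\mathscr{A}\times_3F_{n_3}$ denotes the tensor obtained by applying the discrete Fourier transform ($F_{n_3}$ with entries $\omega^{(i-1)(j-1)}$, $\omega=e^{-2\pi\mathrm{i}/n_3}$) to each tube; its frontal slices $\hat A^{(k)}$ are the Fourier slices. T-product: $\mathscr{A}\star\mathscr{B}$ has Fourier slices $\hat A^{(k)}\hat B^{(k)}$. Transpose $\mathscr{A}^T$: transpose each frontal slice and reverse the order of frontal slices $2,\dots,n_3$. $\mathscr{I}_{nnn_3}$: first frontal slice $I_n$, others zero. A tube is an element of $\mathbb{R}^{1\times1\times n_3}$; $\mathbf{e}$ has entries $(1,0,\dots,0)$, $\mathbf{o}$ is the zero tube. For a tube $\mathbf{a}$, $\mathbf{a}\divideontimes\mathscr{B}$ has $(i,j)$ tube $\mathbf{a}\star\mathscr{B}(i,j,:)$. T-Kronecker product $\mathscr{A}\circledast\mathscr{B}$: Fourier slices $\hat A^{(k)}\otimes\hat B^{(k)}$. T-trace: tube whose $k$-th Fourier slice is the trace of the $k$-th Fourier slice. Tubal inner product $\langle\mathscr{X},\mathscr{Y}\rangle_T=\text{T-trace}(\mathscr{X}^T\star\mathscr{Y})$. T-diamond product: for $\mathscr{X}=[\mathscr{X}_1,\dots,\mathscr{X}_p]$, $\mathscr{Y}=[\mathscr{Y}_1,\dots,\mathscr{Y}_\ell]$ with blocks in $\mathbb{R}^{n\times s\times n_3}$ (concatenated along mode 2), $\mathscr{X}^T\diamondsuit\mathscr{Y}\in\mathbb{R}^{p\times\ell\times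 n_3}$ has $(i,j)$ tube $\langle\mathscr{X}_i,\mathscr{Y}_j\rangle_T$. Normalization of $\mathscr{W}$: $\mathbf{a}$ is the tube with $k$-th Fourier coefficient $\|\hat W^{(k)}\|_F$ and $\mathscr{Q}$ has Fourier slices $\hat W^{(k)}/\|\hat W^{(k)}\|_F$; output $[\mathscr{Q},\mathbf{a}]$. Tubal-global Arnoldi process: $[\mathscr{V}_1,\mathbf{r}_{1,1}]=\mathrm{Normalization}(\mathscr{V})$; for $j=1,\dots,m$: $\mathscr{W}=\mathscr{A}\star\mathscr{V}_j$; for $i=1,\dots,j$: $\mathbf{h}_{i,j}=\langle\mathscr{V}_i,\mathscr{W}\rangle_T$, $\mathscr{W}\leftarrow\mathscr{W}-\mathbf{h}_{i,j}\divideontimes\mathscr{V}_i$; then $[\mathscr{V}_{j+1},\mathbf{h}_{j+1,j}]=\mathrm{Normalization}(\mathscr{W})$. Notation: $\mathbb{V}_m=[\mathscr{V}_1,\dots,\mathscr{V}_m]\in\mathbb{R}^{n\times sm\times n_3}$, $\mathbb{V}_{m+1}=[\mathbb{V}_m,\mathscr{V}_{m+1}]$, $\mathscr{A}\star\mathbb{V}_m=[\mathscr{A}\star\mathscr{V}_1,\dots,\mathscr{A}\star\mathscr{V}_m]$. $\widetilde{\mathscr{H}}_m\in\mathbb{R}^{(m+1)\times m\times n_3}$ is the Hessenberg tensor whose $(i,j)$ tube is $\mathbf{h}_{i,j}$ for $i\le j+1$ and $\mathbf{o}$ otherwise; $\mathscr{H}_m\in\mathbb{R}^{m\times m\times n_3}$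 is obtained by deleting its last horizontal slice; $\mathscr{E}_m=[\mathbf{o},\dots,\mathbf{o},\mathbf{e}]\in\mathbb{R}^{1\times m\times n_3}$. *)

theory Defs
  imports Complex_Main
begin

text \<open>A third-order real tensor is a function
  nat \<Rightarrow> nat \<Rightarrow> nat \<Rightarrow> real (row, column, tube index),
  all indices 0-based; dimensions are passed explicitly and only entries with
  indices in range are meaningful. A tube is a tensor whose only meaningful
  entries are at (0,0,k).\<close>

type_synonym tensor = "nat \<Rightarrow> nat \<Rightarrow> nat \<Rightarrow> real"
type_synonym ctensor = "nat \<Rightarrow> nat \<Rightarrow> nat \<Rightarrow> complex"

definition fft :: "nat \<Rightarrow> tensor \<Rightarrow> ctensor" where
  "fft n3 A = (\<lambda>i j k. \<Sum>t<n3. complex_of_real (A i j t) * cis (- 2 * pi * real k * real t / real n3))"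

definition fromF :: "nat \<Rightarrow> ctensor \<Rightarrow> tensor" where
  "fromF n3 X = (\<lambda>i j t. Re ((1 / of_nat n3) * (\<Sum>k<n3. X i j k * cis (2 * pi * real k * real t / real n3))))"

definition tprod :: "nat \<Rightarrow> nat \<Rightarrow> tensor \<Rightarrow> tensor \<Rightarrow> tensor" where
  "tprod n3 p A B = fromF n3 (\<lambda>i j k. \<Sum>l<p. fft n3 A i l k * fft n3 B l j k)"

definition tadd :: "tensor \<Rightarrow> tensor \<Rightarrow> tensor" where
  "tadd A B = (\<lambda>i j k. A i j k + B i j k)"

definition tsub :: "tensor \<Rightarrow> tensor \<Rightarrow> tensor" where
  "tsub A B = (\<lambda>i j k. A i j k - B i j k)"

definition ttrans :: "nat \<Rightarrow> tensor \<Rightarrow> tensor" where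
  "ttrans n3 A = (\<lambda>i j k. A j i ((n3 - k) mod n3))"

definition tid :: "nat \<Rightarrow> tensor" where
  "tid n = (\<lambda>i j k. if i = j \<and> i < n \<and> k = 0 then 1 else 0)"

definition tscal :: "nat \<Rightarrow> tensor \<Rightarrow> tensor \<Rightarrow> tensor" where
  "tscal n3 a B = fromF n3 (\<lambda>i j k. fft n3 a 0 0 k * fft n3 B i j k)"

text \<open>T-Kronecker product of A (p x q x n3) and B (r x s x n3): Fourier slices are
  Kronecker products; entry ((i r + i'), (j s + j')) = hat A(i,j,k) * hat B(i',j',k).\<close>
definition tkron :: "nat \<Rightarrow> nat \<Rightarrow> nat \<Rightarrow> tensor \<Rightarrow> tensor \<Rightarrow> tensor" where
  "tkron n3 r s A B = fromF n3 (\<lambda>I J k. fft n3 A (I div r) (J div s) k * fft n3 B (I mod r) (J mod s) k)"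

definition ttrace :: "nat \<Rightarrow> nat \<Rightarrow> tensor \<Rightarrow> tensor" where
  "ttrace n3 n X = fromF n3 (\<lambda>_ _ k. \<Sum>i<n. fft n3 X i i k)"

definition tinner :: "nat \<Rightarrow> nat \<Rightarrow> nat \<Rightarrow> tensor \<Rightarrow> tensor \<Rightarrow> tensor" where
  "tinner n3 n s X Y = ttrace n3 s (tprod n3 n (ttrans n3 X) Y)"

definition blk :: "nat \<Rightarrow> nat \<Rightarrow> tensor \<Rightarrow> tensor" where
  "blk s i X = (\<lambda>a b k. X a (i * s + b) k)"

definition tdiamond :: "nat \<Rightarrow> nat \<Rightarrow> nat \<Rightarrow> tensor \<Rightarrow> tensor \<Rightarrow> tensor" where
  "tdiamond n3 n s X Y = (\<lambda>i j k. tinner n3 n s (blk s i X) (blk s j Y) 0 0 k)"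

definition fro_slice :: "nat \<Rightarrow> nat \<Rightarrow> nat \<Rightarrow> tensor \<Rightarrow> nat \<Rightarrow> real" where
  "fro_slice n3 p q W k = sqrt (\<Sum>i<p. \<Sum>j<q. (cmod (fft n3 W i j k))\<^sup>2)"

definition norm_tube :: "nat \<Rightarrow> nat \<Rightarrow> nat \<Rightarrow> tensor \<Rightarrow> tensor" where
  "norm_tube n3 p q W = fromF n3 (\<lambda>_ _ k. complex_of_real (fro_slice n3 p q W k))"

definition norm_Q :: "nat \<Rightarrow> nat \<Rightarrow> nat \<Rightarrow> tensor \<Rightarrow> tensor" where
  "norm_Q n3 p q W = fromF n3 (\<lambda>i j k. fft n3 W i j k / complex_of_real (fro_slice n3 p q W k))"

definition teq :: "nat \<Rightarrow> nat \<Rightarrow> nat \<Rightarrow> tensor \<Rightarrow> tensor \<Rightarrow> bool" where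
  "teq p q n3 A B \<longleftrightarrow> (\<forall>i<p. \<forall>j<q. \<forall>k<n3. A i j k = B i j k)"

text \<open>Vs j is the paper's V_j (j \<ge> 1), h i j is the tube h_{i,j} (1-based indices),
  W j i is the working tensor W in step j after subtracting the first i projections.\<close>
definition arnoldi_run ::
  "nat \<Rightarrow> nat \<Rightarrow> nat \<Rightarrow> tensor \<Rightarrow> tensor \<Rightarrow> nat \<Rightarrow>
   (nat \<Rightarrow> tensor) \<Rightarrow> (nat \<Rightarrow> nat \<Rightarrow> tensor) \<Rightarrow> (nat \<Rightarrow> nat \<Rightarrow> tensor) \<Rightarrow> bool" where
  "arnoldi_run n3 n s A V m Vs h W \<longleftrightarrow>
     (\<forall>k<n3. fro_slice n3 n s V k \<noteq> 0) \<and>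
     Vs 1 = norm_Q n3 n s V \<and>
     (\<forall>j\<in>{1..m}.
        W j 0 = tprod n3 n A (Vs j) \<and>
        (\<forall>i\<in>{1..j}. h i j = tinner n3 n s (Vs i) (W j (i - 1)) \<and>
                     W j i = tsub (W j (i - 1)) (tscal n3 (h i j) (Vs i))) \<and>
        (\<forall>k<n3. fro_slice n3 n s (W j j) k \<noteq> 0) \<and>
        Vs (j + 1) = norm_Q n3 n s (W j j) \<and>
        h (j + 1) j = norm_tube n3 n s (W j j))"

text \<open>\<bbbV>_m = [V_1, ..., V_m] in R^{n x sm x n3}.\<close>
definition VV :: "nat \<Rightarrow> (nat \<Rightarrow> tensor) \<Rightarrow> nat \<Rightarrow> tensor" where
  "VV s Vs m = (\<lambda>a b k. if b < s * m then Vs (b div s + 1) a (b mod s) k else 0)"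

text \<open>Hessenberg tensor tilde H_m ((m+1) x m x n3) and H_m (m x m x n3), 0-based entries.\<close>
definition Htil :: "(nat \<Rightarrow> nat \<Rightarrow> tensor) \<Rightarrow> nat \<Rightarrow> tensor" where
  "Htil h m = (\<lambda>i j k. if i \<le> j + 1 \<and> i < m + 1 \<and> j < m then h (i + 1) (j + 1) 0 0 k else 0)"

definition Hm :: "(nat \<Rightarrow> nat \<Rightarrow> tensor) \<Rightarrow> nat \<Rightarrow> tensor" where
  "Hm h m = (\<lambda>i j k. if i < m then Htil h m i j k else 0)"

definition Em :: "nat \<Rightarrow> tensor" where
  "Em m = (\<lambda>i j k. if i = 0 \<and> j = m - 1 \<and> k = 0 then 1 else 0)"

end

theory Submission
  imports Defs
begin


definition w :: "nat \<Rightarrow> complex" where "w n = cis (- 2 * pi / real n)"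

lemma w_pow_n: "n \<ge> 1 \<Longrightarrow> w n ^ n = 1"
  by (simp add: w_def DeMoivre complex_eq_iff)

lemma w_pow_mult_n: "n \<ge> 1 \<Longrightarrow> w n ^ (n * c) = 1"
  by (simp add: power_mult w_pow_n)

lemma w_pow_eq1: assumes "n \<ge> 1" shows "w n ^ a = 1 \<longleftrightarrow> n dvd a"
proof
  assume h: "w n ^ a = 1"
  define r where "r = a mod n"
  have a: "a = n * (a div n) + r" using r_def by simp
  have "w n ^ a = w n ^ r" using assms by (subst a, simp add: power_add w_pow_mult_n)
  with h have r1: "w n ^ r = 1" by simp
  have rl: "r < n" using assms r_def by simp
  show "n dvd a"
  proof (rule ccontr)
    assume "\<not> n dvd a"
    hence r0: "r > 0" using r_def by (simp add: dvd_eq_mod_eq_0)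
    from r1 have "cos (real r * (- 2 * pi / real n)) = 1"
      by (simp add: w_def DeMoivre complex_eq_iff)
    then obtain q :: int where q: "real r * (- 2 * pi / real n) = of_int q * 2 * pi"
      using cos_one_2pi_int by blast
    hence "pi * (- real r) = pi * (q * real n)" using assms by (simp add: field_simps)
    hence "- real r = q * real n" by (subst (asm) mult_left_cancel) auto
    hence "- int r = q * int n" by (metis of_int_eq_iff of_int_minus of_int_mult of_int_of_nat_eq)
    hence "int r = (-q) * int n" by simp
    moreover have "0 < int r" "int r < int n" using r0 rl by auto
    ultimately show False
    proof (cases "-q \<le> 0")
      case True
      hence "(-q) * int n \<le> 0" by (simp add: mult_nonpos_nonneg)
      thus False using \<open>int r = (-q) * int n\<close> \<open>0 < int r\<close> by simp
    next
      case False
      hence "1 * int n \<le> (-q) * int n" by (intro mult_right_mono) auto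
      thus False using \<open>int r = (-q) * int n\<close> \<open>int r < int n\<close> by simp
    qed
  qed
next
  assume "n dvd a" then obtain c where "a = n * c" by auto
  thus "w n ^ a = 1" using assms by (simp add: w_pow_mult_n)
qed

lemma norm_w: "cmod (w n) = 1" by (simp add: w_def)

lemma w_cnj: assumes "n \<ge> 1" "a + b = n * c" shows "cnj (w n ^ a) = w n ^ b"
proof -
  have 1: "w n ^ a * w n ^ b = 1" using assms by (simp add: power_add[symmetric] w_pow_mult_n)
  have 2: "cnj (w n ^ a) * w n ^ a = 1"
  proof -
    have "cmod (w n ^ a) = 1" by (simp add: norm_power norm_w)
    thus ?thesis using complex_norm_square[of "w n ^ a"] by (simp add: mult.commute)
  qed
  have "cnj (w n ^ a) = cnj (w n ^ a) * (w n ^ a * w n ^ b)" using 1 by simp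
  also have "\<dots> = w n ^ b" using 2 by (simp add: mult.assoc[symmetric])
  finally show ?thesis .
qed

lemma w_sum: assumes "n \<ge> 1" shows "(\<Sum>t<n. w n ^ (a * t)) = (if n dvd a then of_nat n else 0)"
proof (cases "n dvd a")
  case True
  hence "w n ^ a = 1" using assms w_pow_eq1 by blast
  then show ?thesis using True by (simp add: power_mult)
next
  case False
  hence ne: "w n ^ a \<noteq> 1" using assms w_pow_eq1 by blast
  have "(\<Sum>t<n. w n ^ (a * t)) = (\<Sum>t<n. (w n ^ a) ^ t)" by (simp add: power_mult)
  also have "\<dots> = ((w n ^ a) ^ n - 1) / (w n ^ a - 1)" using ne by (rule geometric_sum)
  also have "(w n ^ a) ^ n = 1" using assms by (metis mult.commute power_mult w_pow_mult_n)
  finally show ?thesis using False by simp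
qed

lemma dvd_iff_eq: fixes n k k' :: nat assumes "n \<ge> 1" "k < n" "k' < n" shows "n dvd (k + (n - 1) * k') \<longleftrightarrow> k = k'"
proof -
  obtain n' where n': "n = Suc n'" using assms(1) by (cases n) auto
  have e: "int (k + (n - 1) * k') = (int k - int k') + int n * int k'"
    unfolding n' by (simp add: algebra_simps)
  have "n dvd (k + (n - 1) * k') \<longleftrightarrow> int n dvd (int k - int k')"
  proof -
    have "n dvd (k + (n - 1) * k') \<longleftrightarrow> int n dvd int (k + (n - 1) * k')" by (simp only: int_dvd_int_iff)
    also have "\<dots> \<longleftrightarrow> int n dvd ((int k - int k') + int n * int k')" by (simp only: e)
    also have "\<dots> \<longleftrightarrow> int n dvd (int k - int k')" by (simp add: dvd_add_left_iff)
    finally show ?thesis .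
  qed
  also have "\<dots> \<longleftrightarrow> k = k'"
  proof
    assume "int n dvd (int k - int k')"
    then obtain q where q: "int k - int k' = int n * q" by auto
    have "q = 0"
    proof (rule ccontr)
      assume "q \<noteq> 0"
      hence "\<bar>q\<bar> \<ge> 1" by simp
      hence "\<bar>int n * q\<bar> \<ge> int n" by (simp add: abs_mult mult_le_cancel_left1)
      moreover have "\<bar>int k - int k'\<bar> < int n" using assms by auto
      ultimately show False using q by simp
    qed
    thus "k = k'" using q by simp
  qed simp
  finally show ?thesis .
qed

lemma orth: assumes "n \<ge> 1" "k < n" "k' < n"
  shows "(\<Sum>t<n. w n ^ (k * t) * cnj (w n ^ (k' * t))) = (if k = k' then of_nat n else 0)"
proof -
  have "(\<Sum>t<n. w n ^ (k * t) * cnj (w n ^ (k' * t))) = (\<Sum>t<n. w n ^ ((k + (n - 1) * k') * t))"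
  proof (rule sum.cong[OF refl])
    fix t
    have "cnj (w n ^ (k' * t)) = w n ^ ((n - 1) * k' * t)"
      using assms by (intro w_cnj[where c = "k' * t"]) (auto simp: algebra_simps) 
    then show "w n ^ (k * t) * cnj (w n ^ (k' * t)) = w n ^ ((k + (n - 1) * k') * t)"
      by (simp add: power_add[symmetric] algebra_simps)
  qed
  also have "\<dots> = (if k = k' then of_nat n else 0)" using w_sum[OF assms(1)] dvd_iff_eq[OF assms] by simp
  finally show ?thesis .
qed




lemma fft_w: "fft n A i j k = (\<Sum>t<n. of_real (A i j t) * w n ^ (k * t))"
  unfolding fft_def w_def DeMoivre
  by (intro sum.cong refl arg_cong[where f = "\<lambda>x. _ * x"] arg_cong[where f = cis]) (simp add: field_simps)

lemma fromF_w: "fromF n X i j t = Re ((1 / of_nat n) * (\<Sum>k<n. X i j k * cnj (w n ^ (k * t))))"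
  unfolding fromF_def w_def DeMoivre cis_cnj
  by (intro arg_cong[where f = Re] arg_cong[where f = "\<lambda>x. _ * x"] sum.cong refl arg_cong[where f = cis]) (simp add: field_simps)

definition gi :: "nat \<Rightarrow> nat \<Rightarrow> nat" where "gi n k = (n - k) mod n"

lemma gi_lt: "n \<ge> 1 \<Longrightarrow> gi n k < n" by (simp add: gi_def)

lemma gi_gi: "k < n \<Longrightarrow> gi n (gi n k) = k"
  by (cases "k = 0") (auto simp: gi_def)

lemma gi_bij: "n \<ge> 1 \<Longrightarrow> bij_betw (gi n) {..<n} {..<n}"
  by (rule bij_betw_byWitness[where f' = "gi n"]) (auto simp: gi_gi gi_lt)

lemma w_gi: assumes "n \<ge> 1" "k < n" shows "w n ^ (gi n k * t) = cnj (w n ^ (k * t))"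
proof -
  have "k * t + gi n k * t = n * (if k = 0 then 0 else t)"
    using assms by (cases "k = 0") (auto simp: gi_def algebra_simps)
  from w_cnj[OF assms(1) this] show ?thesis by simp
qed

lemma cnj_w_pow: assumes "n \<ge> 1" shows "cnj (w n ^ a) = w n ^ ((n - 1) * a)"
proof -
  obtain n' where n': "n = Suc n'" using assms by (cases n) auto
  have "a + (n - 1) * a = n * a" unfolding n' by simp
  from w_cnj[OF assms this] show ?thesis .
qed

definition csym :: "nat \<Rightarrow> ctensor \<Rightarrow> bool" where
  "csym n X \<longleftrightarrow> (\<forall>i j k. k < n \<longrightarrow> X i j (gi n k) = cnj (X i j k))"

lemma fft_csym: assumes "n \<ge> 1" shows "csym n (fft n A)"
  unfolding csym_def
proof (intro allI impI)
  fix i j k assume k: "k < n"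
  have "fft n A i j (gi n k) = (\<Sum>t<n. of_real (A i j t) * cnj (w n ^ (k * t)))"
    unfolding fft_w using w_gi[OF assms k] by simp
  also have "\<dots> = cnj (fft n A i j k)" unfolding fft_w by (simp add: cnj_sum)
  finally show "fft n A i j (gi n k) = cnj (fft n A i j k)" .
qed

lemma fromF_fft: assumes "n \<ge> 1" "t < n" shows "fromF n (fft n A) i j t = A i j t"
proof -
  have "(\<Sum>k<n. fft n A i j k * cnj (w n ^ (k * t)))
      = (\<Sum>k<n. \<Sum>u<n. of_real (A i j u) * (w n ^ (u * k) * cnj (w n ^ (t * k))))"
    unfolding fft_w sum_distrib_right by (simp add: mult_ac)
  also have "\<dots> = (\<Sum>u<n. of_real (A i j u) * (\<Sum>k<n. w n ^ (u * k) * cnj (w n ^ (t * k))))"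
    by (subst sum.swap) (simp add: sum_distrib_left)
  also have "\<dots> = (\<Sum>u<n. of_real (A i j u) * (if u = t then of_nat n else 0))"
    using orth[OF assms(1) _ assms(2)] by (intro sum.cong refl) simp
  also have "\<dots> = (\<Sum>u<n. if u = t then of_real (A i j t) * of_nat n else 0)"
    by (intro sum.cong) auto
  also have "\<dots> = of_real (A i j t) * of_nat n" using assms(2) by (simp add: sum.delta)
  finally show ?thesis unfolding fromF_w using assms(1) by simp
qed

lemma Re_real: "cnj z = z \<Longrightarrow> complex_of_real (Re z) = z"
  by (simp add: complex_eq_iff)

lemma fft_fromF: assumes n: "n \<ge> 1" and cs: "csym n X" and k: "k < n"
  shows "fft n (fromF n X) i j k = X i j k"
proof -
  define y where "y t = (1 / of_nat n) * (\<Sum>k<n. X i j k * cnj (w n ^ (k * t)))" for t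
  have yr: "complex_of_real (fromF n X i j t) = y t" for t
  proof -
    have "(\<Sum>k'<n. cnj (X i j k') * w n ^ (k' * t)) = (\<Sum>k'<n. X i j (gi n k') * w n ^ (k' * t))"
      using cs unfolding csym_def by (intro sum.cong refl) simp
    also have "\<dots> = (\<Sum>k'<n. X i j (gi n k') * w n ^ (gi n (gi n k') * t))"
      by (intro sum.cong refl) (simp add: gi_gi)
    also have "\<dots> = (\<Sum>m<n. X i j m * w n ^ (gi n m * t))"
      using sum.reindex_bij_betw[OF gi_bij[OF n], of "\<lambda>m. X i j m * w n ^ (gi n m * t)"] by simp
    also have "\<dots> = (\<Sum>m<n. X i j m * cnj (w n ^ (m * t)))"
      using w_gi[OF n] by (intro sum.cong refl) simp
    finally have "cnj (y t) = y t" unfolding y_def by (simp add: cnj_sum)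
    thus ?thesis unfolding fromF_w y_def[symmetric] by (rule Re_real)
  qed
  have "fft n (fromF n X) i j k = (\<Sum>t<n. y t * w n ^ (k * t))" unfolding fft_w yr ..
  also have "\<dots> = (1 / of_nat n) * (\<Sum>t<n. \<Sum>k'<n. X i j k' * (w n ^ (k * t) * cnj (w n ^ (k' * t))))"
    unfolding y_def sum_distrib_left sum_distrib_right by (simp add: mult_ac)
  also have "\<dots> = (1 / of_nat n) * (\<Sum>k'<n. X i j k' * (\<Sum>t<n. w n ^ (k * t) * cnj (w n ^ (k' * t))))"
    by (subst sum.swap) (simp add: sum_distrib_left)
  also have "\<dots> = (1 / of_nat n) * (\<Sum>k'<n. X i j k' * (if k = k' then of_nat n else 0))"
    using orth[OF n k] by (intro arg_cong[where f = "\<lambda>x. _ * x"] sum.cong refl) simp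
  also have "\<dots> = (1 / of_nat n) * (\<Sum>k'<n. if k = k' then X i j k * of_nat n else 0)"
    by (intro arg_cong[where f = "\<lambda>x. _ * x"] sum.cong) auto
  also have "\<dots> = X i j k" using k n by (simp add: sum.delta)
  finally show ?thesis .
qed

lemma teqI: assumes "n \<ge> 1" "\<And>i j k. i < p \<Longrightarrow> j < q \<Longrightarrow> k < n \<Longrightarrow> fft n A i j k = fft n B i j k"
  shows "teq p q n A B"
  unfolding teq_def
proof (intro allI impI)
  fix i j t assume "i < p" "j < q" "t < n"
  have "A i j t = fromF n (fft n A) i j t" using fromF_fft[OF assms(1) \<open>t < n\<close>] by simp
  also have "\<dots> = fromF n (fft n B) i j t"
    unfolding fromF_def using assms(2)[OF \<open>i < p\<close> \<open>j < q\<close>] by simp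
  also have "\<dots> = B i j t" using fromF_fft[OF assms(1) \<open>t < n\<close>] by simp
  finally show "A i j t = B i j t" .
qed




lemma csymI: "(\<And>i j k. k < n \<Longrightarrow> X i j (gi n k) = cnj (X i j k)) \<Longrightarrow> csym n X"
  unfolding csym_def by blast

lemma fft_gi: "n \<ge> 1 \<Longrightarrow> k < n \<Longrightarrow> fft n A i j (gi n k) = cnj (fft n A i j k)"
  using fft_csym unfolding csym_def by blast

lemma F_tprod: assumes "n \<ge> 1" "k < n"
  shows "fft n (tprod n p A B) i j k = (\<Sum>l<p. fft n A i l k * fft n B l j k)"
  unfolding tprod_def
  by (rule fft_fromF[OF assms(1) csymI assms(2)]) (simp add: fft_gi[OF assms(1)] cnj_sum)

lemma F_tadd: "fft n (tadd A B) i j k = fft n A i j k + fft n B i j k"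
  unfolding fft_def tadd_def by (simp add: sum.distrib distrib_right)

lemma F_tsub: "fft n (tsub A B) i j k = fft n A i j k - fft n B i j k"
  unfolding fft_def tsub_def by (simp add: sum_subtractf left_diff_distrib)

lemma F_ttrans: assumes n: "n \<ge> 1" shows "fft n (ttrans n A) i j k = cnj (fft n A j i k)"
proof -
  have "fft n (ttrans n A) i j k = (\<Sum>t<n. of_real (A j i (gi n t)) * w n ^ (k * t))"
    unfolding fft_w ttrans_def gi_def ..
  also have "\<dots> = (\<Sum>t<n. of_real (A j i (gi n t)) * w n ^ (gi n (gi n t) * k))"
    by (intro sum.cong refl) (simp add: gi_gi mult.commute)
  also have "\<dots> = (\<Sum>u<n. of_real (A j i u) * w n ^ (gi n u * k))"
    using sum.reindex_bij_betw[OF gi_bij[OF n], of "\<lambda>u. of_real (A j i u) * w n ^ (gi n u * k)"] by simp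
  also have "\<dots> = (\<Sum>u<n. of_real (A j i u) * cnj (w n ^ (u * k)))"
    using w_gi[OF n] by (intro sum.cong refl) simp
  also have "\<dots> = cnj (fft n A j i k)" unfolding fft_w by (simp add: cnj_sum mult.commute)
  finally show ?thesis .
qed

lemma F_tscal: assumes "n \<ge> 1" "k < n"
  shows "fft n (tscal n a B) i j k = fft n a 0 0 k * fft n B i j k"
  unfolding tscal_def
  by (rule fft_fromF[OF assms(1) csymI assms(2)]) (simp add: fft_gi[OF assms(1)])

lemma F_tkron: assumes "n \<ge> 1" "k < n"
  shows "fft n (tkron n r s A B) I J k = fft n A (I div r) (J div s) k * fft n B (I mod r) (J mod s) k"
  unfolding tkron_def
  by (rule fft_fromF[OF assms(1) csymI assms(2)]) (simp add: fft_gi[OF assms(1)])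

lemma F_ttrace: assumes "n \<ge> 1" "k < n"
  shows "fft n (ttrace n m X) i j k = (\<Sum>i'<m. fft n X i' i' k)"
  unfolding ttrace_def
  by (rule fft_fromF[OF assms(1) csymI assms(2)]) (simp add: fft_gi[OF assms(1)] cnj_sum)

lemma fro_gi: assumes "n \<ge> 1" "k < n" shows "fro_slice n p q W (gi n k) = fro_slice n p q W k"
  unfolding fro_slice_def using fft_gi[OF assms] by simp

lemma F_norm_tube: assumes "n \<ge> 1" "k < n"
  shows "fft n (norm_tube n p q W) i j k = complex_of_real (fro_slice n p q W k)"
  unfolding norm_tube_def
  by (rule fft_fromF[OF assms(1) csymI assms(2)]) (simp add: fro_gi[OF assms(1)])

lemma F_norm_Q: assumes "n \<ge> 1" "k < n"
  shows "fft n (norm_Q n p q W) i j k = fft n W i j k / complex_of_real (fro_slice n p q W k)"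
  unfolding norm_Q_def
  by (rule fft_fromF[OF assms(1) csymI assms(2)]) (simp add: fro_gi[OF assms(1)] fft_gi[OF assms(1)])

lemma fft_if: "fft n (\<lambda>i j t. if P i j then A i j t else 0) i j k = (if P i j then fft n A i j k else 0)"
  unfolding fft_def by simp

lemma fft_delta0: assumes "n \<ge> 1" shows "fft n (\<lambda>i j t. if t = 0 then 1 else 0) i j k = 1"
proof -
  have "fft n (\<lambda>i j t. if t = 0 then 1 else 0) i j k = (\<Sum>t<n. if t = 0 then 1 else 0)"
    unfolding fft_w by (intro sum.cong refl) simp
  also have "\<dots> = 1" using assms by (simp add: sum.delta)
  finally show ?thesis .
qed

lemma F_tid: assumes "n \<ge> 1" shows "fft n (tid m) i j k = (if i = j \<and> i < m then 1 else 0)"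
proof -
  have "tid m = (\<lambda>i j t. if i = j \<and> i < m then (\<lambda>i j t. if t = 0 then 1 else 0) i j t else 0)"
    unfolding tid_def by (intro ext) auto
  then show ?thesis using fft_delta0[OF assms] by (simp only: fft_if)
qed

lemma F_Em: assumes "n \<ge> 1" shows "fft n (Em m) i j k = (if i = 0 \<and> j = m - 1 then 1 else 0)"
proof -
  have "Em m = (\<lambda>i j t. if i = 0 \<and> j = m - 1 then (\<lambda>i j t. if t = 0 then 1 else 0) i j t else 0)"
    unfolding Em_def by (intro ext) auto
  then show ?thesis using fft_delta0[OF assms] by (simp only: fft_if)
qed

lemma F_VV: "fft n (VV s Vs m) a b k = (if b < s * m then fft n (Vs (b div s + 1)) a (b mod s) k else 0)"
  unfolding fft_def VV_def by (cases "b < s * m") simp_all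

lemma F_blk: "fft n (blk s i X) a b k = fft n X a (i * s + b) k"
  unfolding fft_def blk_def by simp

lemma F_Htil: "fft n (Htil h m) i j k = (if i \<le> j + 1 \<and> i < m + 1 \<and> j < m then fft n (h (i + 1) (j + 1)) 0 0 k else 0)"
proof (cases "i \<le> j + 1 \<and> i < m + 1 \<and> j < m")
  case True then show ?thesis by (simp only: fft_def Htil_def True simp_thms if_True)
next
  case False then show ?thesis by (simp only: fft_def Htil_def False if_False of_real_0 mult_zero_left sum.neutral_const)
qed

lemma F_Hm: "fft n (Hm h m) i j k = (if i < m then fft n (Htil h m) i j k else 0)"
  unfolding fft_def Hm_def by (cases "i < m") simp_all

lemma F_tinner: assumes "n3 \<ge> 1" "k < n3"
  shows "fft n3 (tinner n3 n s X Y) i j k = (\<Sum>b<s. \<Sum>a<n. cnj (fft n3 X a b k) * fft n3 Y a b k)"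
  unfolding tinner_def F_ttrace[OF assms] F_tprod[OF assms] F_ttrans[OF assms(1)] ..

lemma fro_sq: "(fro_slice n p q W k)\<^sup>2 = (\<Sum>i<p. \<Sum>j<q. (cmod (fft n W i j k))\<^sup>2)"
  unfolding fro_slice_def by (simp add: sum_nonneg)




definition ip :: "nat \<Rightarrow> nat \<Rightarrow> (nat \<Rightarrow> nat \<Rightarrow> complex) \<Rightarrow> (nat \<Rightarrow> nat \<Rightarrow> complex) \<Rightarrow> complex" where
  "ip n s X Y = (\<Sum>a<n. \<Sum>b<s. cnj (X a b) * Y a b)"

lemma ip_diff: "ip n s X (\<lambda>a b. Y a b - c * Z a b) = ip n s X Y - c * ip n s X Z"
  unfolding ip_def by (simp add: algebra_simps sum_subtractf sum_distrib_left)

lemma ip_sum: "ip n s X (\<lambda>a b. \<Sum>l\<in>L. c l * Z l a b) = (\<Sum>l\<in>L. c l * ip n s X (Z l))"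
  unfolding ip_def sum_distrib_left
  by (subst sum.swap, rule sum.cong[OF refl], subst sum.swap) (simp add: mult_ac)

lemma ip_scaleL: "ip n s (\<lambda>a b. X a b / complex_of_real r) Y = ip n s X Y / complex_of_real r"
  unfolding ip_def by (simp add: sum_divide_distrib)

lemma ip_scaleR: "ip n s X (\<lambda>a b. Y a b / complex_of_real r) = ip n s X Y / complex_of_real r"
  unfolding ip_def by (simp add: sum_divide_distrib)

lemma ip_cnj: "ip n s Y X = cnj (ip n s X Y)"
  unfolding ip_def by (simp add: cnj_sum mult.commute)

lemma ip_self: "ip n s X X = complex_of_real (\<Sum>a<n. \<Sum>b<s. (cmod (X a b))\<^sup>2)"
  unfolding ip_def of_real_sum
  by (intro sum.cong refl) (subst complex_norm_square, simp add: mult.commute)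

locale arn =
  fixes n3 n s :: nat and A V :: tensor and m :: nat and Vs :: "nat \<Rightarrow> tensor"
    and h W :: "nat \<Rightarrow> nat \<Rightarrow> tensor" and k :: nat
  assumes n3: "n3 \<ge> 1" and kn: "k < n3" and run: "arnoldi_run n3 n s A V m Vs h W"
begin

definition v where "v j a b = fft n3 (Vs j) a b k"
definition av where "av j a b = fft n3 (tprod n3 n A (Vs j)) a b k"
definition hh where "hh i j = fft n3 (h i j) 0 0 k"
definition ww where "ww j i a b = fft n3 (W j i) a b k"
definition fr where "fr j = fro_slice n3 n s (W j j) k"

lemma runD:
  "\<forall>k<n3. fro_slice n3 n s V k \<noteq> 0"
  "Vs 1 = norm_Q n3 n s V"
  "\<And>j. j \<in> {1..m} \<Longrightarrow> W j 0 = tprod n3 n A (Vs j)"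
  "\<And>j i. j \<in> {1..m} \<Longrightarrow> i \<in> {1..j} \<Longrightarrow> h i j = tinner n3 n s (Vs i) (W j (i - 1))"
  "\<And>j i. j \<in> {1..m} \<Longrightarrow> i \<in> {1..j} \<Longrightarrow> W j i = tsub (W j (i - 1)) (tscal n3 (h i j) (Vs i))"
  "\<And>j. j \<in> {1..m} \<Longrightarrow> \<forall>k<n3. fro_slice n3 n s (W j j) k \<noteq> 0"
  "\<And>j. j \<in> {1..m} \<Longrightarrow> Vs (j + 1) = norm_Q n3 n s (W j j)"
  "\<And>j. j \<in> {1..m} \<Longrightarrow> h (j + 1) j = norm_tube n3 n s (W j j)"
  using run unfolding arnoldi_run_def by blast+

lemma ww0: "1 \<le> j \<Longrightarrow> j \<le> m \<Longrightarrow> ww j 0 = av j"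
  using runD(3)[of j] unfolding ww_def av_def by (intro ext) auto

lemma ip_ftinner: "fft n3 (tinner n3 n s X Y) i' j' k = ip n s (\<lambda>a b. fft n3 X a b k) (\<lambda>a b. fft n3 Y a b k)"
  unfolding F_tinner[OF n3 kn] ip_def by (rule sum.swap)

lemma hh_ww: "1 \<le> j \<Longrightarrow> j \<le> m \<Longrightarrow> 1 \<le> i \<Longrightarrow> i \<le> j \<Longrightarrow> hh i j = ip n s (v i) (ww j (i - 1))"
  unfolding hh_def using runD(4)[of j i] ip_ftinner
  by (simp add: v_def[abs_def] ww_def[abs_def])

lemma wwS: "1 \<le> j \<Longrightarrow> j \<le> m \<Longrightarrow> 1 \<le> i \<Longrightarrow> i \<le> j \<Longrightarrow> ww j i a b = ww j (i - 1) a b - hh i j * v i a b"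
  unfolding ww_def hh_def v_def using runD(5)[of j i]
  by (simp add: F_tsub F_tscal[OF n3 kn])

lemma fr_ne: "1 \<le> j \<Longrightarrow> j \<le> m \<Longrightarrow> fr j \<noteq> 0"
  unfolding fr_def using runD(6)[of j] kn by auto

lemma vS: "1 \<le> j \<Longrightarrow> j \<le> m \<Longrightarrow> v (j + 1) a b = ww j j a b / complex_of_real (fr j)"
  unfolding v_def ww_def fr_def using runD(7)[of j] by (simp add: F_norm_Q[OF n3 kn])

lemma hhS: "1 \<le> j \<Longrightarrow> j \<le> m \<Longrightarrow> hh (j + 1) j = complex_of_real (fr j)"
  unfolding hh_def fr_def using runD(8)[of j] by (simp add: F_norm_tube[OF n3 kn])

lemma v1: "v 1 a b = fft n3 V a b k / complex_of_real (fro_slice n3 n s V k)"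
  unfolding v_def using runD(2) by (simp add: F_norm_Q[OF n3 kn])

lemma ww_closed: "1 \<le> j \<Longrightarrow> j \<le> m \<Longrightarrow> i \<le> j \<Longrightarrow> ww j i a b = av j a b - (\<Sum>l<i. hh (l + 1) j * v (l + 1) a b)"
proof (induction i)
  case 0
  then show ?case using ww0 by simp
next
  case (Suc i)
  then show ?case using wwS[of j "Suc i" a b] by simp
qed

lemma ww_closed': "1 \<le> j \<Longrightarrow> j \<le> m \<Longrightarrow> i \<le> j \<Longrightarrow> ww j i = (\<lambda>a b. av j a b - (\<Sum>l<i. hh (l + 1) j * v (l + 1) a b))"
  using ww_closed by (intro ext) auto

definition ON where "ON J \<longleftrightarrow> (\<forall>i<J. \<forall>i'<J. ip n s (v (i + 1)) (v (i' + 1)) = (if i = i' then 1 else 0))"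

lemma ip_v_sum: assumes "ON J" "i < J" "\<And>l. l \<in> L \<Longrightarrow> l < J" "finite L"
  shows "ip n s (v (i + 1)) (\<lambda>a b. \<Sum>l\<in>L. c l * v (l + 1) a b) = (if i \<in> L then c i else 0)"
proof -
  have "ip n s (v (i + 1)) (\<lambda>a b. \<Sum>l\<in>L. c l * v (l + 1) a b) = (\<Sum>l\<in>L. c l * ip n s (v (i + 1)) (v (l + 1)))"
    by (rule ip_sum)
  also have "\<dots> = (\<Sum>l\<in>L. if l = i then c i else 0)"
    using assms unfolding ON_def by (intro sum.cong refl) auto
  also have "\<dots> = (if i \<in> L then c i else 0)" using assms(4) by (simp add: sum.delta)
  finally show ?thesis .
qed

lemma hh_ip_aux: assumes "ON j" "1 \<le> j" "j \<le> m" "i < j" shows "hh (i + 1) j = ip n s (v (i + 1)) (av j)"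
proof -
  have "hh (i + 1) j = ip n s (v (i + 1)) (ww j i)" using hh_ww[of j "i + 1"] assms by simp
  also have "\<dots> = ip n s (v (i + 1)) (av j) - ip n s (v (i + 1)) (\<lambda>a b. \<Sum>l<i. hh (l + 1) j * v (l + 1) a b)"
    using ww_closed'[of j i] assms ip_diff[of n s _ "av j" 1] by simp
  also have "ip n s (v (i + 1)) (\<lambda>a b. \<Sum>l<i. hh (l + 1) j * v (l + 1) a b) = 0"
    using ip_v_sum[OF assms(1) assms(4), of "{..<i}" "\<lambda>l. hh (l + 1) j"] assms by simp
  finally show ?thesis by simp
qed

lemma ip_wwjj: assumes "ON j" "1 \<le> j" "j \<le> m" "i < j" shows "ip n s (v (i + 1)) (ww j j) = 0"
proof -
  have "ip n s (v (i + 1)) (ww j j) = ip n s (v (i + 1)) (av j) - ip n s (v (i + 1)) (\<lambda>a b. \<Sum>l<j. hh (l + 1) j * v (l + 1) a b)"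
    using ww_closed'[of j j] assms ip_diff[of n s _ "av j" 1] by simp
  also have "ip n s (v (i + 1)) (\<lambda>a b. \<Sum>l<j. hh (l + 1) j * v (l + 1) a b) = hh (i + 1) j"
    using ip_v_sum[OF assms(1) assms(4), of "{..<j}" "\<lambda>l. hh (l + 1) j"] assms by simp
  finally show ?thesis using hh_ip_aux[OF assms] by simp
qed

lemma fro_V_ip: "ip n s (\<lambda>a b. fft n3 X a b k) (\<lambda>a b. fft n3 X a b k) = complex_of_real ((fro_slice n3 n s X k)\<^sup>2)"
  unfolding ip_self fro_sq ..

lemma ON_1: "ON 1"
proof -
  have "v 1 = (\<lambda>a b. fft n3 V a b k / complex_of_real (fro_slice n3 n s V k))" using v1 by (intro ext) auto
  hence "ip n s (v 1) (v 1) = complex_of_real ((fro_slice n3 n s V k)\<^sup>2) / complex_of_real (fro_slice n3 n s V k) / complex_of_real (fro_slice n3 n s V k)"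
    by (simp add: ip_scaleL ip_scaleR fro_V_ip)
  also have "\<dots> = 1" using runD(1) kn by (simp add: power2_eq_square)
  finally show ?thesis unfolding ON_def by simp
qed

lemma ON_step: assumes "ON j" "1 \<le> j" "j \<le> m" shows "ON (j + 1)"
proof -
  have vj: "v (j + 1) = (\<lambda>a b. ww j j a b / complex_of_real (fr j))" using vS assms by (intro ext) auto
  have o1: "ip n s (v (i + 1)) (v (j + 1)) = 0" if "i < j" for i
    unfolding vj ip_scaleR using ip_wwjj[OF assms that] by simp
  have o2: "ip n s (v (j + 1)) (v (i + 1)) = 0" if "i < j" for i
    using ip_cnj[of n s "v (i + 1)" "v (j + 1)"] o1[OF that] by simp
  have "ww j j = (\<lambda>a b. fft n3 (W j j) a b k)" unfolding ww_def by (intro ext) simp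
  hence "ip n s (ww j j) (ww j j) = complex_of_real ((fr j)\<^sup>2)" unfolding fr_def using fro_V_ip[of "W j j"] by simp
  hence o3: "ip n s (v (j + 1)) (v (j + 1)) = 1"
    unfolding vj ip_scaleR ip_scaleL using fr_ne[OF assms(2,3)] by (simp add: power2_eq_square)
  show ?thesis unfolding ON_def
  proof (intro allI impI)
    fix i i' assume "i < j + 1" "i' < j + 1"
    then consider "i < j" "i' < j" | "i < j" "i' = j" | "i = j" "i' < j" | "i = j" "i' = j" by linarith
    then show "ip n s (v (i + 1)) (v (i' + 1)) = (if i = i' then 1 else 0)"
      using assms(1) o1 o2 o3 unfolding ON_def by cases auto
  qed
qed

lemma ON_all: "ON (m + 1)"
proof -
  have "1 \<le> j \<Longrightarrow> j \<le> m + 1 \<Longrightarrow> ON j" for j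
  proof (induction j)
    case 0 then show ?case by simp
  next
    case (Suc j)
    show ?case
    proof (cases "j = 0")
      case True then show ?thesis using ON_1 by simp
    next
      case False then show ?thesis using Suc ON_step[of j] by simp
    qed
  qed
  thus ?thesis by simp
qed

lemma ON_v: "i < m + 1 \<Longrightarrow> i' < m + 1 \<Longrightarrow> ip n s (v (i + 1)) (v (i' + 1)) = (if i = i' then 1 else 0)"
  using ON_all unfolding ON_def by blast

lemma ON_mono: "J \<le> m + 1 \<Longrightarrow> ON J"
  using ON_all unfolding ON_def by auto

lemma av_exp: assumes "1 \<le> j" "j \<le> m" shows "av j a b = (\<Sum>l<j + 1. hh (l + 1) j * v (l + 1) a b)"
proof -
  have "ww j j a b = av j a b - (\<Sum>l<j. hh (l + 1) j * v (l + 1) a b)" using ww_closed assms by simp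
  moreover have "ww j j a b = hh (j + 1) j * v (j + 1) a b"
    using vS[OF assms] hhS[OF assms] fr_ne[OF assms] by simp
  ultimately show ?thesis by simp
qed

lemma ip_av: assumes "i < m + 1" "1 \<le> j" "j \<le> m"
  shows "ip n s (v (i + 1)) (av j) = (if i \<le> j then hh (i + 1) j else 0)"
proof -
  have "av j = (\<lambda>a b. \<Sum>l<j + 1. hh (l + 1) j * v (l + 1) a b)" using av_exp assms by (intro ext) auto
  moreover have "ip n s (v (i + 1)) (\<lambda>a b. \<Sum>l<j + 1. hh (l + 1) j * v (l + 1) a b) = (if i \<in> {..<j + 1} then hh (i + 1) j else 0)"
    using assms by (intro ip_v_sum[OF ON_all]) auto
  ultimately show ?thesis by simp
qed

end




lemma ip_cong: "(\<And>a b. a < n \<Longrightarrow> b < s \<Longrightarrow> X a b = X' a b) \<Longrightarrow> (\<And>a b. a < n \<Longrightarrow> b < s \<Longrightarrow> Y a b = Y' a b)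
  \<Longrightarrow> ip n s X Y = ip n s X' Y'"
  unfolding ip_def by (intro sum.cong refl) auto

lemma block_sum: fixes s M :: nat and g :: "nat \<Rightarrow> 'a::comm_monoid_add" shows "(\<Sum>I<s * M. g I) = (\<Sum>i<M. \<Sum>c<s. g (i * s + c))"
proof -
  have "(\<Sum>I<s * M. g I) = (\<Sum>i<M. sum g {i * s..<i * s + s})"
    using sum.nat_group[of g s M] by (simp add: mult.commute)
  also have "\<dots> = (\<Sum>i<M. \<Sum>c<s. g (i * s + c))"
  proof (rule sum.cong[OF refl])
    fix i
    have "sum g {0 + i * s..<s + i * s} = (\<Sum>c = 0..<s. g (c + i * s))" by (rule sum.shift_bounds_nat_ivl)
    thus "sum g {i * s..<i * s + s} = (\<Sum>c<s. g (i * s + c))" by (simp add: add.commute atLeast0LessThan)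
  qed
  finally show ?thesis .
qed

lemma sum_if_less: fixes M N :: nat shows "M \<le> N \<Longrightarrow> (\<Sum>i<N. if i < M then f i else 0) = (\<Sum>i<M. f i)"
proof -
  assume "M \<le> N"
  hence "{i \<in> {..<N}. i < M} = {..<M}" by auto
  moreover have "(\<Sum>i<N. if i < M then f i else 0) = sum f {i \<in> {..<N}. i < M}"
    by (rule sum.inter_filter[symmetric]) simp
  ultimately show ?thesis by simp
qed

lemma idx_lt: fixes i M b s :: nat assumes "i < M" "b < s" shows "i * s + b < s * M"
proof -
  have "i * s + b < i * s + s" using \<open>b < s\<close> by simp
  also have "\<dots> = (i + 1) * s" by simp
  also have "\<dots> \<le> M * s" using \<open>i < M\<close> by (intro mult_right_mono) auto
  finally show ?thesis by (simp add: mult.commute)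
qed

context arn
begin

lemma F_VVblk: "i < M \<Longrightarrow> b < s \<Longrightarrow> fft n3 (VV s Vs M) a (i * s + b) k = v (i + 1) a b"
proof -
  assume "i < M" "b < s"
  moreover have "i * s + b < s * M" using idx_lt \<open>i < M\<close> \<open>b < s\<close> by blast
  ultimately show ?thesis unfolding F_VV v_def by simp
qed

lemma F_AVV: "fft n3 (tprod n3 n A (VV s Vs M)) a b k = (if b < s * M then av (b div s + 1) a (b mod s) else 0)"
  unfolding F_tprod[OF n3 kn] F_VV av_def by (cases "b < s * M") (simp_all add: F_tprod[OF n3 kn])

lemma F_diam: "fft n3 (tdiamond n3 n s X Y) i j k = ip n s (\<lambda>a b. fft n3 X a (i * s + b) k) (\<lambda>a b. fft n3 Y a (j * s + b) k)"
proof -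
  have "fft n3 (tdiamond n3 n s X Y) i j k = fft n3 (tinner n3 n s (blk s i X) (blk s j Y)) 0 0 k"
    unfolding fft_def tdiamond_def ..
  thus ?thesis unfolding ip_ftinner F_blk .
qed

lemma diam_VV_AVV: assumes "i < M" "M \<le> m + 1" "j < m"
  shows "fft n3 (tdiamond n3 n s (VV s Vs M) (tprod n3 n A (VV s Vs m))) i j k
     = (if i \<le> j + 1 then hh (i + 1) (j + 1) else 0)"
proof -
  have "fft n3 (tdiamond n3 n s (VV s Vs M) (tprod n3 n A (VV s Vs m))) i j k = ip n s (v (i + 1)) (av (j + 1))"
    unfolding F_diam
  proof (rule ip_cong)
    fix a b assume "a < n" "b < s"
    show "fft n3 (VV s Vs M) a (i * s + b) k = v (i + 1) a b" using F_VVblk assms \<open>b < s\<close> by simp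
    have "j * s + b < s * m" using idx_lt \<open>b < s\<close> assms(3) by blast
    thus "fft n3 (tprod n3 n A (VV s Vs m)) a (j * s + b) k = av (j + 1) a b"
      unfolding F_AVV using \<open>b < s\<close> by simp
  qed
  also have "\<dots> = (if i \<le> j + 1 then hh (i + 1) (j + 1) else 0)"
    using ip_av[of i "j + 1"] assms by simp
  finally show ?thesis .
qed

end




context arn
begin

lemma F_tid_s: "c < s \<Longrightarrow> r < s \<Longrightarrow> fft n3 (tid s) c r k = (if c = r then 1 else 0)"
  using F_tid[OF n3] by simp

lemma F_VVkron: assumes "s \<ge> 1"
  shows "fft n3 (tprod n3 (s * M) (VV s Vs M) (tkron n3 s s H (tid s))) a b k
       = (\<Sum>i<M. v (i + 1) a (b mod s) * fft n3 H i (b div s) k)"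
proof -
  have r: "b mod s < s" using assms by simp
  have "fft n3 (tprod n3 (s * M) (VV s Vs M) (tkron n3 s s H (tid s))) a b k
      = (\<Sum>I<s * M. fft n3 (VV s Vs M) a I k * (fft n3 H (I div s) (b div s) k * fft n3 (tid s) (I mod s) (b mod s) k))"
    unfolding F_tprod[OF n3 kn] F_tkron[OF n3 kn] ..
  also have "\<dots> = (\<Sum>i<M. \<Sum>c<s. fft n3 (VV s Vs M) a (i * s + c) k * (fft n3 H ((i * s + c) div s) (b div s) k * fft n3 (tid s) ((i * s + c) mod s) (b mod s) k))"
    by (rule block_sum)
  also have "\<dots> = (\<Sum>i<M. \<Sum>c<s. if c = b mod s then v (i + 1) a (b mod s) * fft n3 H i (b div s) k else 0)"
  proof (intro sum.cong refl)
    fix i c assume "i \<in> {..<M}" "c \<in> {..<s}"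
    hence "i < M" "c < s" by auto
    moreover have "(i * s + c) div s = i" "(i * s + c) mod s = c" using \<open>c < s\<close> by auto
    ultimately show "fft n3 (VV s Vs M) a (i * s + c) k * (fft n3 H ((i * s + c) div s) (b div s) k * fft n3 (tid s) ((i * s + c) mod s) (b mod s) k)
      = (if c = b mod s then v (i + 1) a (b mod s) * fft n3 H i (b div s) k else 0)"
      using F_VVblk F_tid_s r by auto
  qed
  also have "\<dots> = (\<Sum>i<M. v (i + 1) a (b mod s) * fft n3 H i (b div s) k)"
    using r by (simp add: sum.delta')
  finally show ?thesis .
qed

lemma F_kron2: assumes "s \<ge> 1"
  shows "fft n3 (tprod n3 s (Vs (m + 1)) (tkron n3 s s T (tid s))) a b k = v (m + 1) a (b mod s) * fft n3 T 0 (b div s) k"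
proof -
  have r: "b mod s < s" using assms by simp
  have "fft n3 (tprod n3 s (Vs (m + 1)) (tkron n3 s s T (tid s))) a b k
      = (\<Sum>l<s. v (m + 1) a l * (fft n3 T (l div s) (b div s) k * fft n3 (tid s) (l mod s) (b mod s) k))"
    unfolding F_tprod[OF n3 kn] F_tkron[OF n3 kn] v_def ..
  also have "\<dots> = (\<Sum>l<s. if l = b mod s then v (m + 1) a (b mod s) * fft n3 T 0 (b div s) k else 0)"
    using F_tid_s r by (intro sum.cong refl) auto
  also have "\<dots> = v (m + 1) a (b mod s) * fft n3 T 0 (b div s) k" using r by (simp add: sum.delta')
  finally show ?thesis .
qed

lemma F_hE: "fft n3 (tprod n3 1 (h (m + 1) m) (Em m)) 0 q k = hh (m + 1) m * (if q = m - 1 then 1 else 0)"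
  unfolding F_tprod[OF n3 kn] F_Em[OF n3] hh_def by simp

lemma claim3: assumes "s \<ge> 1" "m \<ge> 1" "b < s * m"
  shows "fft n3 (tprod n3 n A (VV s Vs m)) a b k
       = fft n3 (tprod n3 (s * (m + 1)) (VV s Vs (m + 1)) (tkron n3 s s (Htil h m) (tid s))) a b k"
proof -
  define q where "q = b div s"
  define r where "r = b mod s"
  have q: "q < m" using assms unfolding q_def by (simp add: less_mult_imp_div_less mult.commute)
  have "fft n3 (tprod n3 (s * (m + 1)) (VV s Vs (m + 1)) (tkron n3 s s (Htil h m) (tid s))) a b k
     = (\<Sum>i<m + 1. v (i + 1) a r * fft n3 (Htil h m) i q k)"
    unfolding F_VVkron[OF assms(1)] q_def r_def ..
  also have "\<dots> = (\<Sum>i<m + 1. if i < q + 2 then hh (i + 1) (q + 1) * v (i + 1) a r else 0)"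
    using q by (intro sum.cong refl) (auto simp: F_Htil hh_def)
  also have "\<dots> = (\<Sum>i<q + 2. hh (i + 1) (q + 1) * v (i + 1) a r)"
    using q by (intro sum_if_less) simp
  also have "\<dots> = av (q + 1) a r" using av_exp[of "q + 1" a r] q by simp
  also have "\<dots> = fft n3 (tprod n3 n A (VV s Vs m)) a b k"
    unfolding F_AVV q_def r_def using assms by simp
  finally show ?thesis by simp
qed

lemma claim1: assumes "s \<ge> 1" "m \<ge> 1" "b < s * m"
  shows "fft n3 (tprod n3 n A (VV s Vs m)) a b k
       = fft n3 (tadd (tprod n3 (s * m) (VV s Vs m) (tkron n3 s s (Hm h m) (tid s)))
              (tprod n3 s (Vs (m + 1))
                 (tkron n3 s s (tprod n3 1 (h (m + 1) m) (Em m)) (tid s)))) a b k"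
proof -
  define q where "q = b div s"
  define r where "r = b mod s"
  have q: "q < m" using assms unfolding q_def by (simp add: less_mult_imp_div_less mult.commute)
  have "fft n3 (tadd (tprod n3 (s * m) (VV s Vs m) (tkron n3 s s (Hm h m) (tid s)))
              (tprod n3 s (Vs (m + 1))
                 (tkron n3 s s (tprod n3 1 (h (m + 1) m) (Em m)) (tid s)))) a b k
     = (\<Sum>i<m. v (i + 1) a r * fft n3 (Hm h m) i q k) + v (m + 1) a r * (hh (m + 1) m * (if q = m - 1 then 1 else 0))"
    unfolding F_tadd F_VVkron[OF assms(1)] F_kron2[OF assms(1)] F_hE q_def r_def ..
  also have "(\<Sum>i<m. v (i + 1) a r * fft n3 (Hm h m) i q k) = (\<Sum>i<m. if i < q + 2 then hh (i + 1) (q + 1) * v (i + 1) a r else 0)"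
    using q by (intro sum.cong refl) (auto simp: F_Hm F_Htil hh_def)
  also have "(\<Sum>i<m. if i < q + 2 then hh (i + 1) (q + 1) * v (i + 1) a r else 0) + v (m + 1) a r * (hh (m + 1) m * (if q = m - 1 then 1 else 0))
     = (\<Sum>i<q + 2. hh (i + 1) (q + 1) * v (i + 1) a r)"
  proof (cases "q = m - 1")
    case True
    hence qm: "q + 1 = m" using q by simp
    have "(\<Sum>i<m. if i < q + 2 then hh (i + 1) (q + 1) * v (i + 1) a r else 0) = (\<Sum>i<m. hh (i + 1) m * v (i + 1) a r)"
      using qm by (intro sum.cong refl) auto
    moreover have "q + 2 = Suc m" using qm by simp
    ultimately show ?thesis using True qm by (simp add: mult.commute)
  next
    case False
    hence "q + 2 \<le> m" using q by simp
    thus ?thesis using False by (simp add: sum_if_less)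
  qed
  also have "\<dots> = av (q + 1) a r" using av_exp[of "q + 1" a r] q by simp
  also have "\<dots> = fft n3 (tprod n3 n A (VV s Vs m)) a b k"
    unfolding F_AVV q_def r_def using assms by simp
  finally show ?thesis by simp
qed

lemma claim2: assumes "i < m" "j < m"
  shows "fft n3 (tdiamond n3 n s (VV s Vs m) (tprod n3 n A (VV s Vs m))) i j k = fft n3 (Hm h m) i j k"
  using diam_VV_AVV[of i m j] assms by (simp add: F_Hm F_Htil hh_def)

lemma claim4: assumes "i < m + 1" "j < m"
  shows "fft n3 (tdiamond n3 n s (VV s Vs (m + 1)) (tprod n3 n A (VV s Vs m))) i j k = fft n3 (Htil h m) i j k"
  using diam_VV_AVV[of i "m + 1" j] assms by (simp add: F_Htil hh_def)

lemma claim5: assumes "i < m" "j < m"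
  shows "fft n3 (tdiamond n3 n s (VV s Vs m) (VV s Vs m)) i j k = fft n3 (tid m) i j k"
proof -
  have "fft n3 (tdiamond n3 n s (VV s Vs m) (VV s Vs m)) i j k = ip n s (v (i + 1)) (v (j + 1))"
    unfolding F_diam using F_VVblk assms by (intro ip_cong) auto
  also have "\<dots> = (if i = j then 1 else 0)" using ON_v assms by simp
  finally show ?thesis using F_tid[OF n3] assms by simp
qed

end

theorem proposition7:
  fixes n3 n s m :: nat
    and A V :: tensor
    and Vs :: "nat \<Rightarrow> tensor"
    and h W :: "nat \<Rightarrow> nat \<Rightarrow> tensor"
  assumes "n3 \<ge> 1" and "n \<ge> 1" and "s \<ge> 1" and "m \<ge> 1"
    and "arnoldi_run n3 n s A V m Vs h W"
  shows
    "teq n (s * m) n3 (tprod n3 n A (VV s Vs m))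
        (tadd (tprod n3 (s * m) (VV s Vs m) (tkron n3 s s (Hm h m) (tid s)))
              (tprod n3 s (Vs (m + 1))
                 (tkron n3 s s (tprod n3 1 (h (m + 1) m) (Em m)) (tid s))))
    \<and> teq m m n3 (tdiamond n3 n s (VV s Vs m) (tprod n3 n A (VV s Vs m))) (Hm h m)
    \<and> teq n (s * m) n3 (tprod n3 n A (VV s Vs m))
        (tprod n3 (s * (m + 1)) (VV s Vs (m + 1)) (tkron n3 s s (Htil h m) (tid s)))
    \<and> teq (m + 1) m n3 (tdiamond n3 n s (VV s Vs (m + 1)) (tprod n3 n A (VV s Vs m))) (Htil h m)
    \<and> teq m m n3 (tdiamond n3 n s (VV s Vs m) (VV s Vs m)) (tid m)"
proof -
  have L: "arn n3 n s A V m Vs h W k" if "k < n3" for k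
    using assms that by unfold_locales auto
  show ?thesis
    using arn.claim1[OF L] arn.claim2[OF L] arn.claim3[OF L] arn.claim4[OF L] arn.claim5[OF L] assms
    by (intro conjI teqI[OF assms(1)]) auto
qed


end
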